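(* Let $r$ be a prime power, $q=r^2$, and let $M$ be a positive integer with $M\mid(r+1)$. If there exist Hermitian self-orthogonal linear codes over $\mathbb{F}_q$ with parameters $[m,k_1,d_1]_q,[m,k_2,d_2]_q,\dots,[m,k_M,d_M]_q$, then there exists a Hermitian self-orthogonal linear code over $\mathbb{F}_q$ with parameters $[Mm,k_1+k_2+\cdots+k_M,d]_q$ where $d\ge\min\{Md_1,(M-1)d_2,\dots,d_M\}$ (i.e., $d\ge\min_{1\le i\le M}(M-i+1)d_i$).
   Context: For $a\in\mathbb{F}_q$, $\overline{a}:=a^r$. The Hermitian inner product on $\mathbb{F}_q^n$ is $\langle u,v\rangle_H=\sum_i u_i\overline{v_i}$; a linear code $C$ is Hermitian self-orthogonal if $C\subseteq C^{\perp_H}$. A code with parameters $[n,k,d]_q$ is a linear code of length $n$, dimension $k$ and minimum Hamming weight $d$ over $\mathbb{F}_q$. *)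

theory Defs
  imports "HOL-Analysis.Analysis" "HOL-Computational_Algebra.Primes" "HOL-Library.Function_Algebras"
begin

text \<open>Vectors of length n over a field are modelled as functions nat => 'a
  vanishing outside {0..<n}; scalar multiplication is componentwise.\<close>

definition vscale :: "'a::field \<Rightarrow> (nat \<Rightarrow> 'a) \<Rightarrow> (nat \<Rightarrow> 'a)" where
  "vscale c v = (\<lambda>i. c * v i)"

definition linear_code :: "nat \<Rightarrow> (nat \<Rightarrow> 'a::field) set \<Rightarrow> bool" where
  "linear_code n C \<longleftrightarrow> module.subspace vscale C \<and> (\<forall>v\<in>C. \<forall>i\<ge>n. v i = 0)"

definition code_dim :: "(nat \<Rightarrow> 'a::field) set \<Rightarrow> nat" where
  "code_dim C = vector_space.dim vscale C"

definition hamming_wt :: "nat \<Rightarrow> (nat \<Rightarrow> 'a::zero) \<Rightarrow> nat" where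
  "hamming_wt n v = card {i. i < n \<and> v i \<noteq> 0}"

text \<open>Minimum distance = minimum weight of a nonzero codeword (0 for the zero code).\<close>
definition min_dist :: "nat \<Rightarrow> (nat \<Rightarrow> 'a::zero) set \<Rightarrow> nat" where
  "min_dist n C = Inf {hamming_wt n v | v. v \<in> C \<and> v \<noteq> 0}"

text \<open>Conjugation a |-> a^r and the Hermitian inner product.\<close>
definition herm_ip :: "nat \<Rightarrow> nat \<Rightarrow> (nat \<Rightarrow> 'a::field) \<Rightarrow> (nat \<Rightarrow> 'a) \<Rightarrow> 'a" where
  "herm_ip r n u v = (\<Sum>i<n. u i * (v i) ^ r)"

definition herm_self_orth :: "nat \<Rightarrow> nat \<Rightarrow> (nat \<Rightarrow> 'a::field) set \<Rightarrow> bool" where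
  "herm_self_orth r n C \<longleftrightarrow> (\<forall>u\<in>C. \<forall>v\<in>C. herm_ip r n u v = 0)"

definition prime_power :: "nat \<Rightarrow> bool" where
  "prime_power r \<longleftrightarrow> (\<exists>p e. prime p \<and> e \<ge> 1 \<and> r = p ^ e)"

end

theory Submission
  imports Defs "HOL-Computational_Algebra.Polynomial" "HOL-Number_Theory.Residues" "HOL-Decision_Procs.Algebra_Aux" "HOL-Algebra.Multiplicative_Group"
begin
lemma gen_exists: "\<exists>a::'a::{field,finite}. a \<noteq> 0 \<and> (\<forall>x. x \<noteq> 0 \<longrightarrow> (\<exists>i. x = a ^ i))"
proof -
  have "finite (carrier (cring_class_ops :: 'a ring))" by (simp add: cring_class_ops_def)
  note X = field.finite_field_mult_group_has_gen[OF field_class this]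
  have c: "carrier (mult_of (cring_class_ops :: 'a ring)) = UNIV - {0}"
    by (simp add: cring_class_ops_def)
  from X obtain a where a: "a \<in> carrier (mult_of (cring_class_ops :: 'a ring))"
    and e: "\<forall>x\<in>carrier (mult_of (cring_class_ops :: 'a ring)). \<exists>i. x = a [^]\<^bsub>cring_class_ops\<^esub> (i::nat)"
    by fastforce
  have h: "\<exists>i. x = a ^ i" if "x \<noteq> 0" for x
  proof -
    have "x \<in> carrier (mult_of (cring_class_ops :: 'a ring))" using c that by auto
    then show "\<exists>i. x = a ^ i" using e by (auto simp: power_class)
  qed
  have "a \<noteq> 0" using a c by auto
  with h show ?thesis by blast
qed

lemma power_card_minus1:
  fixes x :: "'a::{field,finite}"
  assumes "x \<noteq> 0"
  shows "x ^ (CARD('a) - 1) = 1"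
proof -
  have "x * (\<Prod>y\<in>UNIV-{0}. x * y) = x * x ^ (card (UNIV :: 'a set) - 1) * \<Prod>(UNIV-{0})"
    by (simp add: prod.distrib mult_ac)
  moreover have "(\<Prod>y\<in>UNIV-{0}. x * y) = (\<Prod>y\<in>UNIV-{0}. y)"
    by (rule prod.reindex_bij_witness[of _ "\<lambda>y. y / x" "\<lambda>y. x * y"]) (use assms in auto)
  moreover have "\<Prod>(UNIV-{0::'a}) \<noteq> 0" by (simp add: prod_zero_iff)
  ultimately show ?thesis using assms by simp
qed

lemma root_exists:
  fixes M :: nat
  assumes "M dvd CARD('a::{field,finite}) - 1" "M \<ge> 1"
  shows "\<exists>w::'a. w ^ M = 1 \<and> (\<forall>j. 0 < j \<and> j < M \<longrightarrow> w ^ j \<noteq> 1)"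
proof -
  obtain a :: 'a where a0: "a \<noteq> 0" and ag: "\<And>x. x \<noteq> 0 \<Longrightarrow> \<exists>i. x = a ^ i"
    using gen_exists by blast
  define N where "N = CARD('a) - 1"
  have cardN: "card (UNIV - {0::'a}) = N" unfolding N_def by (simp add: card_Diff_singleton)
  have aN: "a ^ N = 1" unfolding N_def using power_card_minus1 a0 by blast
  have nord: "a ^ n \<noteq> 1" if "0 < n" "n < N" for n
  proof
    assume an: "a ^ n = 1"
    have "UNIV - {0::'a} \<subseteq> (\<lambda>i. a ^ i) ` {..<n}"
    proof
      fix x :: 'a assume "x \<in> UNIV - {0}"
      then obtain i where "x = a ^ i" using ag by auto
      moreover have "a ^ i = a ^ (i mod n)"
      proof -
        have "a ^ i = a ^ (n * (i div n) + i mod n)" by simp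
        also have "\<dots> = (a ^ n) ^ (i div n) * a ^ (i mod n)" by (simp only: power_add power_mult)
        finally show ?thesis using an by simp
      qed
      ultimately show "x \<in> (\<lambda>i. a ^ i) ` {..<n}" using that by auto
    qed
    then have "card (UNIV - {0::'a}) \<le> card ((\<lambda>i. a ^ i) ` {..<n})" by (intro card_mono) auto
    also have "\<dots> \<le> n" using card_image_le[of "{..<n}" "\<lambda>i. a ^ i"] by simp
    finally show False using cardN that by simp
  qed
  obtain K where K: "N = M * K" using assms(1) unfolding N_def by (elim dvdE)
  show ?thesis
  proof (intro exI[of _ "a ^ K"] conjI allI impI)
    show "(a ^ K) ^ M = 1" using aN K by (simp add: power_mult mult.commute)
    fix j assume j: "0 < j \<and> j < M"
    have "N > 0" proof (rule ccontr)
      assume "\<not> N > 0" then have "card (UNIV - {0::'a}) = 0" using cardN by simp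
      moreover have "card {0,1::'a} \<le> card (UNIV::'a set)" by (rule card_mono) auto
      ultimately show False by (simp add: card_Diff_singleton)
    qed
    then have "K > 0" using K by (cases K) auto
    then have "0 < K * j" "K * j < N" using j K by auto
    moreover have "(a ^ K) ^ j = a ^ (K * j)" by (simp add: power_mult)
    ultimately show "(a ^ K) ^ j \<noteq> 1" using nord by metis
  qed
qed
lemma vs_vscale: "vector_space (vscale :: 'a::field \<Rightarrow> (nat \<Rightarrow> 'a) \<Rightarrow> (nat \<Rightarrow> 'a))"
  by unfold_locales (auto simp: vscale_def fun_eq_iff algebra_simps)

lemma finite_code:
  fixes C :: "(nat \<Rightarrow> 'a::{field,finite}) set"
  assumes "linear_code n C"
  shows "finite C"
proof -
  have "C \<subseteq> (\<lambda>g i. if i < n then g i else 0) ` (PiE {..<n} (\<lambda>_. UNIV :: 'a set))"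
  proof
    fix v assume v: "v \<in> C"
    then have "v = (\<lambda>i. if i < n then restrict v {..<n} i else 0)"
      using assms unfolding linear_code_def by (auto simp: fun_eq_iff)
    then show "v \<in> (\<lambda>g i. if i < n then g i else 0) ` (PiE {..<n} (\<lambda>_. UNIV :: 'a set))"
      by (intro image_eqI[of _ _ "restrict v {..<n}"]) auto
  qed
  moreover have "finite (PiE {..<n} (\<lambda>_. UNIV :: 'a set))" by (intro finite_PiE) auto
  ultimately show ?thesis using finite_subset by blast
qed

lemma card_code:
  fixes C :: "(nat \<Rightarrow> 'a::{field,finite}) set"
  assumes "linear_code n C"
  shows "card C = CARD('a) ^ code_dim C"
proof -
  interpret V: vector_space "vscale :: 'a \<Rightarrow> (nat \<Rightarrow> 'a) \<Rightarrow> (nat \<Rightarrow> 'a)" by (rule vs_vscale)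
  have sub: "V.subspace C" using assms unfolding linear_code_def by simp
  obtain B where B0: "B \<subseteq> C" "V.independent B" "C \<subseteq> V.span B" "card B = V.dim C"
    using V.basis_exists by blast
  have B: "finite B" "B \<subseteq> C" "V.independent B" "V.span B = C" "card B = V.dim C"
    using B0 finite_subset[OF B0(1) finite_code[OF assms]] V.span_subspace[OF B0(1) B0(3) sub] by auto
  define f where "f u = (\<Sum>v\<in>B. vscale (u v) v)" for u
  have "C = range f" using V.span_finite[OF B(1)] B(4) unfolding f_def by simp
  also have "range f = f ` (PiE B (\<lambda>_. UNIV))"
  proof
    show "range f \<subseteq> f ` (PiE B (\<lambda>_. UNIV))"
    proof
      fix y assume "y \<in> range f"
      then obtain u where y: "y = f u" by auto
      have "f u = f (restrict u B)" unfolding f_def by (intro sum.cong) auto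
      moreover have "restrict u B \<in> PiE B (\<lambda>_. UNIV)" by simp
      ultimately show "y \<in> f ` (PiE B (\<lambda>_. UNIV))" using y by blast
    qed
  qed auto
  finally have C: "C = f ` (PiE B (\<lambda>_. UNIV))" .
  have inj: "inj_on f (PiE B (\<lambda>_. UNIV))"
  proof (rule inj_onI)
    fix u u' assume u: "u \<in> PiE B (\<lambda>_. UNIV)" and u': "u' \<in> PiE B (\<lambda>_. UNIV)" and e: "f u = f u'"
    have "(\<Sum>v\<in>B. vscale (u v - u' v) v) = f u - f u'"
      unfolding f_def by (simp add: V.scale_left_diff_distrib sum_subtractf)
    then have z: "(\<Sum>v\<in>B. vscale (u v - u' v) v) = 0" using e by simp
    have "\<forall>v\<in>B. u v - u' v = 0"
      using V.independentD[OF B(3) B(1) order_refl z] by blast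
    then show "u = u'" using u u' by (intro PiE_ext) auto
  qed
  have "card C = card (PiE B (\<lambda>_. UNIV :: 'a set))" using C inj by (simp add: card_image)
  also have "\<dots> = CARD('a) ^ card B" using B(1) by (simp add: card_PiE)
  finally show ?thesis using B(5) unfolding code_dim_def by simp
qed



lemma char_facts:
  assumes "prime_power r" "CARD('a::{field,finite}) = r^2"
  shows "prime CHAR('a) \<and> (\<exists>e\<ge>1. r = CHAR('a)^e)"
proof -
  obtain p e where p: "prime p" "e \<ge> 1" "r = p ^ e" using assms(1) unfolding prime_power_def by blast
  have pc: "prime CHAR('a)" by (rule prime_CHAR_semidom[OF finite_imp_CHAR_pos]) simp
  have "CHAR('a) dvd p ^ (e * 2)" using CHAR_dvd_CARD[where 'a='a] assms(2) p(3) by (simp add: power_mult)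
  then have "CHAR('a) dvd p" using prime_dvd_power pc by blast
  then have "CHAR('a) = p" using primes_dvd_imp_eq pc p(1) by blast
  then show ?thesis using pc p by blast
qed

lemma M_nonzero:
  assumes "prime_power r" "CARD('a::{field,finite}) = r^2" "M dvd r + 1"
  shows "(of_nat M :: 'a) \<noteq> 0"
proof
  assume "(of_nat M :: 'a) = 0"
  then have d: "CHAR('a) dvd M" using of_nat_eq_0_iff_char_dvd by blast
  obtain e where e: "e \<ge> 1" "r = CHAR('a)^e" and pc: "prime CHAR('a)" using char_facts[OF assms(1,2)] by blast
  have "CHAR('a) dvd r" using e by (simp add: dvd_power)
  moreover have "CHAR('a) dvd r + 1" using d assms(3) dvd_trans by blast
  ultimately have "CHAR('a) dvd 1" using dvd_add_right_iff by blast
  then show False using pc by simp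
qed

lemma frob_sum:
  assumes "prime_power r" "CARD('a::{field,finite}) = r^2"
  shows "(sum (f :: 'b \<Rightarrow> 'a) A) ^ r = (\<Sum>i\<in>A. (f i) ^ r)"
proof -
  obtain e where e: "e \<ge> 1" "r = CHAR('a)^e" and pc: "prime CHAR('a)" using char_facts[OF assms] by blast
  show ?thesis by (rule freshmans_dream_sum'[OF pc e(2)])
qed

lemma pow_inj:
  fixes w :: "'a::field"
  assumes "w \<noteq> 0" "\<forall>j. 0<j \<and> j<M \<longrightarrow> w^j \<noteq> 1" "i < M" "l < M" "w ^ i = w ^ l"
  shows "i = l"
proof (rule ccontr)
  assume ne: "i \<noteq> l"
  have *: False if "a < b" "b < M" "w ^ a = w ^ b" for a b
  proof -
    have "w ^ b = w ^ (a + (b - a))" using that by simp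
    also have "\<dots> = w ^ a * w ^ (b - a)" by (rule power_add)
    finally have "w ^ b = w ^ a * w ^ (b - a)" .
    then have "w ^ (b - a) = 1" using that assms(1) by simp
    then show False using assms(2) that by auto
  qed
  show False using ne assms(3-5) *[of i l] *[of l i] by (cases "i < l") auto
qed

lemma orth:
  fixes w :: "'a::field"
  assumes "w ^ M = 1" "\<forall>j. 0<j \<and> j<M \<longrightarrow> w^j \<noteq> 1" "w^(r+1) = 1" "i < M" "l < M"
  shows "(\<Sum>j<M. w^(i*j) * (w^(l*j))^r) = (if i = l then of_nat M else 0)"
proof -
  have w0: "w \<noteq> 0" using assms(3) by auto
  have inv: "w^l * (w^l)^r = 1"
  proof -
    have "w^l * (w^l)^r = (w^(r+1))^l" by (simp add: power_mult_distrib flip: power_mult power_Suc)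
      (simp add: mult_ac)
    then show ?thesis using assms(3) by simp
  qed
  define \<beta> where "\<beta> = w^i * (w^l)^r"
  have t: "w^(i*j) * (w^(l*j))^r = \<beta>^j" for j
    by (simp add: \<beta>_def power_mult_distrib flip: power_mult) (simp add: mult_ac)
  have s: "(\<Sum>j<M. w^(i*j) * (w^(l*j))^r) = (\<Sum>j<M. \<beta>^j)" using t by simp
  show ?thesis
  proof (cases "i = l")
    case True
    then have "\<beta> = 1" using inv by (simp add: \<beta>_def)
    then show ?thesis using s True by simp
  next
    case False
    have bM: "\<beta>^M = 1"
    proof -
      have "\<beta>^M = (w^M)^i * ((w^M)^l)^r" by (simp add: \<beta>_def power_mult_distrib flip: power_mult) (simp add: mult_ac)
      then show ?thesis using assms(1) by simp
    qed
    have "\<beta> * w^l = w^i" using inv by (simp add: \<beta>_def mult.assoc mult.commute[of "(w^l)^r"])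
    then have "\<beta> \<noteq> 1" using pow_inj[OF w0 assms(2,4,5)] False by auto
    then show ?thesis using s False bM by (simp add: sum_gp_strict)
  qed
qed



definition enc :: "'a::field \<Rightarrow> nat \<Rightarrow> nat \<Rightarrow> (nat \<Rightarrow> nat \<Rightarrow> 'a) \<Rightarrow> nat \<Rightarrow> 'a" where
  "enc w M m c t = (if t < M * m then (\<Sum>i\<in>{1..M}. w ^ ((i - 1) * (t div m)) * c i (t mod m)) else 0)"

lemma blk_lt: "j < M \<Longrightarrow> s < (m::nat) \<Longrightarrow> j * m + s < M * m"
proof -
  assume "j < M" "s < m"
  then have "j * m + s < j * m + m" by simp
  also have "\<dots> = Suc j * m" by simp
  also have "\<dots> \<le> M * m" using \<open>j < M\<close> by (intro mult_right_mono) auto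
  finally show ?thesis .
qed

lemma enc_blk:
  assumes "j < M" "s < m"
  shows "enc w M m c (j * m + s) = (\<Sum>i\<in>{1..M}. w ^ ((i - 1) * j) * c i s)"
  using assms blk_lt[OF assms] unfolding enc_def by simp

lemma sum_blocks:
  fixes M m :: nat and f :: "nat \<Rightarrow> 'a::comm_monoid_add"
  shows "(\<Sum>t<M * m. f t) = (\<Sum>j<M. \<Sum>s<m. f (j * m + s))"
proof -
  have "(\<Sum>t<M * m. f t) = (\<Sum>j<M. sum f {j * m..<j * m + m})" using sum.nat_group[of f m M] by simp
  also have "\<dots> = (\<Sum>j<M. \<Sum>s<m. f (j * m + s))"
  proof (rule sum.cong[OF refl])
    fix j
    have "{j * m..<j * m + m} = (\<lambda>s. j * m + s) ` {..<m}"
    proof (auto simp: image_iff)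
      fix x assume "j * m \<le> x" "x < j * m + m"
      then show "\<exists>xa\<in>{..<m}. x = j * m + xa" by (intro bexI[of _ "x - j * m"]) auto
    qed
    then show "sum f {j * m..<j * m + m} = (\<Sum>s<m. f (j * m + s))"
      by (simp add: sum.reindex inj_on_def)
  qed
  finally show ?thesis .
qed

lemma recover:
  fixes w :: "'a::field"
  assumes "w ^ M = 1" "\<forall>j. 0<j \<and> j<M \<longrightarrow> w^j \<noteq> 1" "w^(r+1) = 1" "l \<in> {1..M}" "s < m"
  shows "(\<Sum>j<M. enc w M m c (j * m + s) * (w ^ ((l - 1) * j)) ^ r) = of_nat M * c l s"
proof -
  have "(\<Sum>j<M. enc w M m c (j * m + s) * (w ^ ((l - 1) * j)) ^ r)
      = (\<Sum>j<M. \<Sum>i\<in>{1..M}. c i s * (w ^ ((i - 1) * j) * (w ^ ((l - 1) * j)) ^ r))"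
  proof (rule sum.cong[OF refl])
    fix j assume "j \<in> {..<M}"
    then have jM: "j < M" by simp
    have "enc w M m c (j * m + s) * (w ^ ((l - 1) * j)) ^ r
        = (\<Sum>i\<in>{1..M}. w ^ ((i - 1) * j) * c i s) * (w ^ ((l - 1) * j)) ^ r"
      by (simp only: enc_blk[OF jM assms(5)])
    also have "\<dots> = (\<Sum>i\<in>{1..M}. w ^ ((i - 1) * j) * c i s * (w ^ ((l - 1) * j)) ^ r)"
      by (rule sum_distrib_right)
    also have "\<dots> = (\<Sum>i\<in>{1..M}. c i s * (w ^ ((i - 1) * j) * (w ^ ((l - 1) * j)) ^ r))"
      by (simp add: mult_ac)
    finally show "enc w M m c (j * m + s) * (w ^ ((l - 1) * j)) ^ r
        = (\<Sum>i\<in>{1..M}. c i s * (w ^ ((i - 1) * j) * (w ^ ((l - 1) * j)) ^ r))" .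
  qed
  also have "\<dots> = (\<Sum>i\<in>{1..M}. c i s * (\<Sum>j<M. w ^ ((i - 1) * j) * (w ^ ((l - 1) * j)) ^ r))"
    by (simp add: sum.swap[of _ "{..<M}"] sum_distrib_left)
  also have "\<dots> = (\<Sum>i\<in>{1..M}. c i s * (if i = l then of_nat M else 0))"
  proof (rule sum.cong[OF refl])
    fix i assume i: "i \<in> {1..M}"
    have "(\<Sum>j<M. w ^ ((i - 1) * j) * (w ^ ((l - 1) * j)) ^ r) = (if i - 1 = l - 1 then of_nat M else 0)"
      using orth[OF assms(1-3), of "i - 1" "l - 1"] i assms(4) by auto
    also have "\<dots> = (if i = l then of_nat M else 0)" using i assms(4) by auto
    finally show "c i s * (\<Sum>j<M. w ^ ((i - 1) * j) * (w ^ ((l - 1) * j)) ^ r) = c i s * (if i = l then of_nat M else 0)" by simp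
  qed
  also have "\<dots> = of_nat M * c l s" using assms(4) by (simp add: if_distrib[of "\<lambda>x. c _ s * x"] sum.delta cong: if_cong)
  finally show ?thesis .
qed

lemma swap3:
  fixes A :: "nat \<Rightarrow> nat \<Rightarrow> 'a::comm_semiring_1"
  shows "(\<Sum>j<M. \<Sum>s<m. A j s * (\<Sum>l\<in>L. B l j * D l s)) = (\<Sum>l\<in>L. \<Sum>s<m. D l s * (\<Sum>j<M. A j s * B l j))"
proof -
  have "(\<Sum>j<M. \<Sum>s<m. A j s * (\<Sum>l\<in>L. B l j * D l s)) = (\<Sum>j<M. \<Sum>s<m. \<Sum>l\<in>L. D l s * (A j s * B l j))"
    by (simp add: sum_distrib_left mult_ac)
  also have "\<dots> = (\<Sum>j<M. \<Sum>l\<in>L. \<Sum>s<m. D l s * (A j s * B l j))"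
    by (rule sum.cong[OF refl], rule sum.swap)
  also have "\<dots> = (\<Sum>l\<in>L. \<Sum>j<M. \<Sum>s<m. D l s * (A j s * B l j))" by (rule sum.swap)
  also have "\<dots> = (\<Sum>l\<in>L. \<Sum>s<m. \<Sum>j<M. D l s * (A j s * B l j))"
    by (rule sum.cong[OF refl], rule sum.swap)
  also have "\<dots> = (\<Sum>l\<in>L. \<Sum>s<m. D l s * (\<Sum>j<M. A j s * B l j))"
    by (simp add: sum_distrib_left)
  finally show ?thesis .
qed

lemma enc_orth:
  fixes w :: "'a::{field,finite}"
  assumes "prime_power r" "CARD('a) = r^2"
    and "w ^ M = 1" "\<forall>j. 0<j \<and> j<M \<longrightarrow> w^j \<noteq> 1" "w^(r+1) = 1"
    and "\<forall>i\<in>{1..M}. herm_ip r m (c i) (c' i) = 0"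
  shows "herm_ip r (M * m) (enc w M m c) (enc w M m c') = 0"
proof -
  have "herm_ip r (M * m) (enc w M m c) (enc w M m c')
      = (\<Sum>j<M. \<Sum>s<m. enc w M m c (j * m + s) * (enc w M m c' (j * m + s)) ^ r)"
    unfolding herm_ip_def by (rule sum_blocks)
  also have "\<dots> = (\<Sum>j<M. \<Sum>s<m. enc w M m c (j * m + s) * (\<Sum>l\<in>{1..M}. (w ^ ((l - 1) * j)) ^ r * (c' l s) ^ r))"
    by (intro sum.cong refl) (simp add: enc_blk frob_sum[OF assms(1,2)] power_mult_distrib)
  also have "\<dots> = (\<Sum>l\<in>{1..M}. \<Sum>s<m. (c' l s) ^ r * (\<Sum>j<M. enc w M m c (j * m + s) * (w ^ ((l - 1) * j)) ^ r))"
    by (rule swap3)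
  also have "\<dots> = (\<Sum>l\<in>{1..M}. \<Sum>s<m. of_nat M * (c l s * (c' l s) ^ r))"
  proof (rule sum.cong[OF refl], rule sum.cong[OF refl])
    fix l s assume l: "l \<in> {1..M}" and s: "s \<in> {..<m}"
    have "(c' l s) ^ r * (\<Sum>j<M. enc w M m c (j * m + s) * (w ^ ((l - 1) * j)) ^ r)
        = (c' l s) ^ r * (of_nat M * c l s)" using recover[OF assms(3-5) l] s by simp
    then show "(c' l s) ^ r * (\<Sum>j<M. enc w M m c (j * m + s) * (w ^ ((l - 1) * j)) ^ r)
        = of_nat M * (c l s * (c' l s) ^ r)" by (simp add: mult_ac)
  qed
  also have "\<dots> = (\<Sum>l\<in>{1..M}. of_nat M * herm_ip r m (c l) (c' l))"
    unfolding herm_ip_def by (simp add: sum_distrib_left)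
  also have "\<dots> = 0" using assms(6) by simp
  finally show ?thesis .
qed



lemma zeros_bound:
  fixes w :: "'a::field"
  assumes w0: "w \<noteq> 0" and prim: "\<forall>j. 0<j \<and> j<M \<longrightarrow> w^j \<noteq> 1"
    and s0: "s0 \<in> {1..M}" and hi: "\<forall>i\<in>{1..M}. s0 < i \<longrightarrow> c i = 0"
    and x: "x < m" and nz: "c s0 x \<noteq> 0"
  shows "card {j. j < M \<and> enc w M m c (j * m + x) = 0} \<le> s0 - 1"
proof -
  define P where "P = (\<Sum>i<s0. Polynomial.monom (c (i + 1) x) i)"
  have ev: "enc w M m c (j * m + x) = poly P (w ^ j)" if j: "j < M" for j
  proof -
    have "enc w M m c (j * m + x) = (\<Sum>i\<in>{1..M}. w ^ ((i - 1) * j) * c i x)"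
      using enc_blk[OF j x] .
    also have "\<dots> = (\<Sum>i\<in>{1..s0}. w ^ ((i - 1) * j) * c i x)"
      using s0 hi by (intro sum.mono_neutral_right) auto
    also have "\<dots> = (\<Sum>i<s0. w ^ (i * j) * c (i + 1) x)"
      by (simp add: sum.atLeast1_atMost_eq)
    also have "\<dots> = poly P (w ^ j)"
      unfolding P_def by (simp add: poly_sum poly_monom mult_ac flip: power_mult)
    finally show ?thesis .
  qed
  have cP: "Polynomial.coeff P (s0 - 1) = c s0 x"
  proof -
    have "Polynomial.coeff P (s0 - 1) = (\<Sum>i<s0. if i = s0 - 1 then c (i + 1) x else 0)"
      unfolding P_def by (simp add: coeff_sum coeff_monom)
    also have "\<dots> = c s0 x" using s0 by (simp add: sum.delta)
    finally show ?thesis .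
  qed
  have P0: "P \<noteq> 0" using cP nz by auto
  have dP: "degree P \<le> s0 - 1"
    unfolding P_def by (intro degree_sum_le) (auto intro: order_trans[OF degree_monom_le])
  let ?Z = "{j. j < M \<and> enc w M m c (j * m + x) = 0}"
  have inj: "inj_on (\<lambda>j. w ^ j) ?Z"
    using pow_inj[OF w0 prim] by (auto simp: inj_on_def)
  have sub: "(\<lambda>j. w ^ j) ` ?Z \<subseteq> {z. poly P z = 0}" using ev by auto
  have "card ?Z = card ((\<lambda>j. w ^ j) ` ?Z)" using card_image[OF inj] by simp
  also have "\<dots> \<le> card {z. poly P z = 0}"
    using sub poly_roots_finite[OF P0] by (intro card_mono) auto
  also have "\<dots> \<le> degree P" by (rule card_poly_roots_bound[OF P0])
  finally show ?thesis using dP by simp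
qed

lemma wt_bound:
  fixes w :: "'a::field"
  assumes w0: "w \<noteq> 0" and prim: "\<forall>j. 0<j \<and> j<M \<longrightarrow> w^j \<noteq> 1"
    and s0: "s0 \<in> {1..M}" and hi: "\<forall>i\<in>{1..M}. s0 < i \<longrightarrow> c i = 0"
  shows "(M - s0 + 1) * hamming_wt m (c s0) \<le> hamming_wt (M * m) (enc w M m c)"
proof -
  let ?X = "{x. x < m \<and> c s0 x \<noteq> 0}"
  let ?Y = "\<lambda>x. {j. j < M \<and> enc w M m c (j * m + x) \<noteq> 0}"
  have Y: "M - s0 + 1 \<le> card (?Y x)" if "x \<in> ?X" for x
  proof -
    have "{..<M} = ?Y x \<union> {j. j < M \<and> enc w M m c (j * m + x) = 0}" by auto
    then have "M = card (?Y x \<union> {j. j < M \<and> enc w M m c (j * m + x) = 0})"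
      by (metis card_lessThan)
    also have "\<dots> \<le> card (?Y x) + card {j. j < M \<and> enc w M m c (j * m + x) = 0}"
      by (rule card_Un_le)
    finally show ?thesis
      using zeros_bound[OF w0 prim s0 hi, where x=x and m=m] that s0 by auto
  qed
  have fX: "finite ?X" by auto
  have "(M - s0 + 1) * hamming_wt m (c s0) = card ?X * (M - s0 + 1)"
    unfolding hamming_wt_def by simp
  also have "\<dots> \<le> (\<Sum>x\<in>?X. card (?Y x))" using sum_bounded_below[of ?X "M - s0 + 1" "\<lambda>x. card (?Y x)"] Y by simp
  also have "\<dots> = card (Sigma ?X ?Y)" using fX by (simp add: card_SigmaI)
  also have "\<dots> = card ((\<lambda>(x, j). j * m + x) ` Sigma ?X ?Y)"
  proof (rule card_image[symmetric], rule inj_onI, clarify)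
    fix x j x' j'
    assume h: "x < m" "x' < m" "j * m + x = j' * m + x'"
    have "(j * m + x) mod m = x" using h(1) by (metis add.commute mod_less mod_mult_self1)
    moreover have "(j' * m + x') mod m = x'" using h(2) by (metis add.commute mod_less mod_mult_self1)
    ultimately have "x = x'" using h(3) by simp
    moreover then have "j * m = j' * m" using h by simp
    then have "j = j'" using h by simp
    ultimately show "x = x' \<and> j = j'" by simp
  qed
  also have "\<dots> \<le> hamming_wt (M * m) (enc w M m c)"
    unfolding hamming_wt_def
  proof (rule card_mono)
    show "finite {i. i < M * m \<and> enc w M m c i \<noteq> 0}" by auto
    show "(\<lambda>(x, j). j * m + x) ` Sigma ?X ?Y \<subseteq> {i. i < M * m \<and> enc w M m c i \<noteq> 0}"
      using blk_lt by auto
  qed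
  finally show ?thesis .
qed


lemma enc_inj:
  fixes w :: "'a::field"
  assumes "w ^ M = 1" "\<forall>j. 0<j \<and> j<M \<longrightarrow> w^j \<noteq> 1" "w^(r+1) = 1" "(of_nat M :: 'a) \<noteq> 0"
    and "\<forall>i\<in>{1..M}. \<forall>s\<ge>m. c i s = 0 \<and> c' i s = 0"
    and "enc w M m c = enc w M m c'"
    and "l \<in> {1..M}"
  shows "c l = c' l"
proof
  fix s show "c l s = c' l s"
  proof (cases "s < m")
    case True
    have "of_nat M * c l s = of_nat M * c' l s"
      using recover[OF assms(1-3) assms(7) True, of c] recover[OF assms(1-3) assms(7) True, of c'] assms(6) by simp
    then show ?thesis using assms(4) by simp
  next
    case False then show ?thesis using assms(5,7) by auto
  qed
qed

lemma enc_add: "enc w M m c + enc w M m c' = enc w M m (\<lambda>i. c i + c' i)"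
  by (simp add: fun_eq_iff enc_def sum.distrib distrib_left)

lemma enc_scale: "vscale a (enc w M m c) = enc w M m (\<lambda>i. vscale a (c i))"
  by (simp add: fun_eq_iff enc_def vscale_def sum_distrib_left mult_ac)

lemma enc_zero: "enc w M m (\<lambda>i. 0) = 0"
  by (simp add: fun_eq_iff enc_def)

lemma enc_restrict: "enc w M m (restrict c {1..M}) = enc w M m c"
  by (simp add: fun_eq_iff enc_def)

theorem corollary4p2:
  fixes r M m :: nat
    and C :: "nat \<Rightarrow> (nat \<Rightarrow> 'a::{field,finite}) set"
    and k d :: "nat \<Rightarrow> nat"
  assumes "prime_power r"
    and "CARD('a) = r ^ 2"
    and "M \<ge> 1" and "M dvd (r + 1)"
    and "\<And>i. i \<in> {1..M} \<Longrightarrow> linear_code m (C i) \<and> herm_self_orth r m (C i)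
            \<and> code_dim (C i) = k i \<and> min_dist m (C i) = d i"
  shows "\<exists>D :: (nat \<Rightarrow> 'a) set. linear_code (M * m) D \<and> herm_self_orth r (M * m) D
           \<and> code_dim D = (\<Sum>i=1..M. k i)
           \<and> min_dist (M * m) D \<ge> Min ((\<lambda>i. (M - i + 1) * d i) ` {1..M})"
proof -
  interpret V: vector_space "vscale :: 'a \<Rightarrow> (nat \<Rightarrow> 'a) \<Rightarrow> (nat \<Rightarrow> 'a)" by (rule vs_vscale)
  note hC = assms(5)
  have sub: "V.subspace (C i)" if "i \<in> {1..M}" for i using hC[OF that] unfolding linear_code_def by simp
  have supp: "\<forall>s\<ge>m. v s = 0" if "i \<in> {1..M}" "v \<in> C i" for i v
    using hC[OF that(1)] that(2) unfolding linear_code_def by simp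
  obtain p e where pe: "prime p" "e \<ge> 1" "r = p ^ e" using assms(1) unfolding prime_power_def by blast
  have "p ^ 1 \<le> p ^ e" using pe prime_gt_0_nat[OF pe(1)] by (intro power_increasing) auto
  then have r2: "r \<ge> 2" using pe prime_ge_2_nat[OF pe(1)] by simp
  have q1: "CARD('a) - 1 = (r + 1) * (r - 1)" using assms(2) r2
    by (cases r) (auto simp: power2_eq_square algebra_simps)
  have "M dvd CARD('a) - 1" unfolding q1 using assms(4) by (rule dvd_mult2)
  then obtain w :: 'a where w1: "w ^ M = 1" and prim: "\<forall>j. 0 < j \<and> j < M \<longrightarrow> w ^ j \<noteq> 1"
    using root_exists assms(3) by blast
  obtain t where t: "r + 1 = M * t" using assms(4) by (elim dvdE)
  have wr: "w ^ (r + 1) = 1" using w1 t by (simp add: power_mult)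
  have w0: "w \<noteq> 0" using w1 assms(3) by (cases M) auto
  have Mnz: "(of_nat M :: 'a) \<noteq> 0" by (rule M_nonzero[OF assms(1,2,4)])
  define P where "P = {c :: nat \<Rightarrow> nat \<Rightarrow> 'a. \<forall>i\<in>{1..M}. c i \<in> C i}"
  define D where "D = enc w M m ` P"
  have lin: "linear_code (M * m) D"
    unfolding linear_code_def
  proof
    show "V.subspace D"
    proof (rule V.subspaceI)
      have "(\<lambda>i. 0) \<in> P" unfolding P_def using V.subspace_0[OF sub] by auto
      then show "0 \<in> D" unfolding D_def using enc_zero by (metis image_eqI)
    next
      fix x y assume "x \<in> D" "y \<in> D"
      then obtain c c' where c: "c \<in> P" "x = enc w M m c" and c': "c' \<in> P" "y = enc w M m c'"
        unfolding D_def by auto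
      have "(\<lambda>i. c i + c' i) \<in> P" using c c' V.subspace_add[OF sub] unfolding P_def by auto
      then show "x + y \<in> D" unfolding D_def c c' enc_add by blast
    next
      fix a x assume "x \<in> D"
      then obtain c where c: "c \<in> P" "x = enc w M m c" unfolding D_def by auto
      have "(\<lambda>i. vscale a (c i)) \<in> P" using c V.subspace_scale[OF sub] unfolding P_def by auto
      then show "vscale a x \<in> D" unfolding D_def c enc_scale by blast
    qed
    show "\<forall>v\<in>D. \<forall>i\<ge>M * m. v i = 0" unfolding D_def by (auto simp: enc_def)
  qed
  have orthD: "herm_self_orth r (M * m) D"
    unfolding herm_self_orth_def
  proof (intro ballI)
    fix u v assume "u \<in> D" "v \<in> D"
    then obtain c c' where c: "c \<in> P" "u = enc w M m c" and c': "c' \<in> P" "v = enc w M m c'"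
      unfolding D_def by auto
    have "\<forall>i\<in>{1..M}. herm_ip r m (c i) (c' i) = 0"
      using c c' hC unfolding P_def herm_self_orth_def by blast
    then show "herm_ip r (M * m) u v = 0" unfolding c c' by (rule enc_orth[OF assms(1,2) w1 prim wr])
  qed
  have injP: "\<forall>i\<in>{1..M}. c i = c' i" if "c \<in> P" "c' \<in> P" "enc w M m c = enc w M m c'" for c c'
  proof
    fix l assume l: "l \<in> {1..M}"
    show "c l = c' l"
    proof (rule enc_inj[OF w1 prim wr Mnz _ that(3) l])
      show "\<forall>i\<in>{1..M}. \<forall>s\<ge>m. c i s = 0 \<and> c' i s = 0" using that(1,2) supp unfolding P_def by blast
    qed
  qed
  have dimD: "code_dim D = (\<Sum>i=1..M. k i)"
  proof -
    have DP: "D = enc w M m ` (PiE {1..M} C)"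
    proof
      show "D \<subseteq> enc w M m ` (PiE {1..M} C)"
      proof
        fix x assume "x \<in> D"
        then obtain c where c: "c \<in> P" "x = enc w M m c" unfolding D_def by auto
        have "restrict c {1..M} \<in> PiE {1..M} C" using c unfolding P_def by auto
        moreover have "x = enc w M m (restrict c {1..M})" using c(2) enc_restrict[of w M m c] by simp
        ultimately show "x \<in> enc w M m ` (PiE {1..M} C)" by blast
      qed
      show "enc w M m ` (PiE {1..M} C) \<subseteq> D"
      proof
        fix x assume "x \<in> enc w M m ` (PiE {1..M} C)"
        then obtain c where c: "c \<in> PiE {1..M} C" "x = enc w M m c" by blast
        have "c \<in> P" unfolding P_def using c(1) PiE_mem by blast
        then show "x \<in> D" unfolding D_def c(2) by (rule imageI)
      qed
    qed
    have inj: "inj_on (enc w M m) (PiE {1..M} C)"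
    proof (rule inj_onI)
      fix c c' assume cc: "c \<in> PiE {1..M} C" "c' \<in> PiE {1..M} C" and e: "enc w M m c = enc w M m c'"
      have "c \<in> P" "c' \<in> P" unfolding P_def using cc PiE_mem by blast+
      then have eq: "\<forall>i\<in>{1..M}. c i = c' i" using injP e by blast
      show "c = c'" by (rule PiE_ext[OF cc]) (use eq in blast)
    qed
    have "card D = card (PiE {1..M} C)" unfolding DP by (rule card_image[OF inj])
    also have "\<dots> = (\<Prod>i\<in>{1..M}. card (C i))" by (simp add: card_PiE)
    also have "\<dots> = (\<Prod>i\<in>{1..M}. CARD('a) ^ k i)"
    proof (rule prod.cong[OF refl])
      fix i assume i: "i \<in> {1..M}"
      show "card (C i) = CARD('a) ^ k i" using card_code[of m "C i"] hC[OF i] by simp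
    qed
    also have "\<dots> = CARD('a) ^ (\<Sum>i=1..M. k i)" by (rule power_sum[symmetric])
    finally have "CARD('a) ^ code_dim D = CARD('a) ^ (\<Sum>i=1..M. k i)" using card_code[OF lin] by simp
    moreover have "CARD('a) > 1"
    proof -
      have "r \<le> r ^ 2" by (simp add: power2_eq_square)
      then show ?thesis using assms(2) r2 by simp
    qed
    ultimately show ?thesis by (simp add: power_inject_exp)
  qed
  have distD: "min_dist (M * m) D \<ge> Min ((\<lambda>i. (M - i + 1) * d i) ` {1..M})"
  proof -
    let ?B = "Min ((\<lambda>i. (M - i + 1) * d i) ` {1..M})"
    let ?W = "{hamming_wt (M * m) v | v. v \<in> D \<and> v \<noteq> 0}"
    have Ble: "?B \<le> (M - i + 1) * d i" if "i \<in> {1..M}" for i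
      using that by (intro Min_le) auto
    have zP: "(\<lambda>l. 0) \<in> P" unfolding P_def using V.subspace_0[OF sub] by auto
    show ?thesis
    proof (cases "?W = {}")
      case True
      have allz: "C i \<subseteq> {0}" if i: "i \<in> {1..M}" for i
      proof
        fix v assume v: "v \<in> C i"
        define c where "c = (\<lambda>l. if l = i then v else (0::nat\<Rightarrow>'a))"
        have cP: "c \<in> P" unfolding P_def c_def using v V.subspace_0[OF sub] by auto
        have "enc w M m c \<in> D" unfolding D_def using cP by blast
        then have "enc w M m c = 0" using True by auto
        then have "enc w M m c = enc w M m (\<lambda>l. 0)" using enc_zero by simp
        then have "\<forall>l\<in>{1..M}. c l = 0" using injP[OF cP zP] by simp
        then have "c i = 0" using i by blast
        then show "v \<in> {0}" unfolding c_def by simp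
      qed
      have "d M = min_dist m (C M)" using hC[of M] assms(3) by auto
      also have "\<dots> = Inf {}"
      proof -
        have "{hamming_wt m v | v. v \<in> C M \<and> v \<noteq> 0} = {}" using allz[of M] assms(3) by auto
        then show ?thesis unfolding min_dist_def by (rule arg_cong)
      qed
      also have "\<dots> = min_dist (M * m) D" unfolding min_dist_def using True[symmetric] by (rule arg_cong)
      finally have "d M = min_dist (M * m) D" .
      moreover have "?B \<le> (M - M + 1) * d M" using Ble[of M] assms(3) by simp
      ultimately show ?thesis by simp
    next
      case False
      show ?thesis unfolding min_dist_def
      proof (rule cInf_greatest[OF False])
        fix x assume "x \<in> ?W"
        then obtain v where v: "x = hamming_wt (M * m) v" "v \<in> D" "v \<noteq> 0" by blast
        then obtain c where c: "c \<in> P" "v = enc w M m c" unfolding D_def by auto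
        let ?S = "{i \<in> {1..M}. c i \<noteq> 0}"
        have Sne: "?S \<noteq> {}"
        proof
          assume "?S = {}"
          then have "\<forall>i\<in>{1..M}. c i = 0" by auto
          then have "enc w M m c = 0" by (auto simp: enc_def fun_eq_iff intro!: sum.neutral)
          then show False using v c by simp
        qed
        define s0 where "s0 = Max ?S"
        have s0S: "s0 \<in> ?S" unfolding s0_def using Sne by (intro Max_in) auto
        have hi: "\<forall>i\<in>{1..M}. s0 < i \<longrightarrow> c i = 0"
        proof (intro ballI impI)
          fix i assume i: "i \<in> {1..M}" "s0 < i"
          show "c i = 0"
          proof (rule ccontr)
            assume "c i \<noteq> 0"
            then have "i \<le> s0" unfolding s0_def using i by (intro Max_ge) auto
            then show False using i by simp
          qed
        qed
        have s0M: "s0 \<in> {1..M}" using s0S by blast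
        have cs0: "c s0 \<in> C s0" using c s0M unfolding P_def by auto
        have "d s0 \<le> hamming_wt m (c s0)"
        proof -
          have "d s0 = Inf {hamming_wt m v | v. v \<in> C s0 \<and> v \<noteq> 0}"
            using hC[OF s0M] unfolding min_dist_def by auto
          also have "\<dots> \<le> hamming_wt m (c s0)" using cs0 s0S by (intro cInf_lower) auto
          finally show ?thesis .
        qed
        then have "(M - s0 + 1) * d s0 \<le> (M - s0 + 1) * hamming_wt m (c s0)" by (rule mult_le_mono2)
        then have "?B \<le> (M - s0 + 1) * hamming_wt m (c s0)" using Ble[OF s0M] by linarith
        also have "\<dots> \<le> x" using wt_bound[OF w0 prim s0M hi, of m] v c by simp
        finally show "?B \<le> x" .
      qed
    qed
  qed
  show ?thesis using lin orthD dimD distD by blast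
qed

end
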